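(* For all integers $m\ge1$ and $r\ge2$, the determinant of the Hessian matrix $\big(\partial_{\xi_i}\partial_{\xi_j}A_r(\xi)\big)_{i,j=1}^m$ is a nonzero polynomial in $\xi=(\xi_1,\dots,\xi_m)$.
   Context: $A_r(\xi_1,\dots,\xi_m)=\sum_{k\in\mathbb N^m,\ \sum_ik_i=r}\binom{r}{k_1,\dots,k_m}^2\prod_i\xi_i^{k_i}$, where $\binom{r}{k_1,\dots,k_m}$ is the multinomial coefficient. *)

theory Defs
  imports "HOL-Analysis.Analysis"
begin

definition multinom :: "nat \<Rightarrow> ('m::finite \<Rightarrow> nat) \<Rightarrow> real" where
  "multinom r k = real (fact r) / (\<Prod>i\<in>UNIV. real (fact (k i)))"

definition A :: "nat \<Rightarrow> real^'m::finite \<Rightarrow> real" where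
  "A r \<xi> = (\<Sum>k\<in>{k::'m \<Rightarrow> nat. (\<Sum>i\<in>UNIV. k i) = r}.
              (multinom r k)^2 * (\<Prod>i\<in>UNIV. (\<xi>$i) ^ (k i)))"

definition partial :: "'m::finite \<Rightarrow> (real^'m \<Rightarrow> real) \<Rightarrow> real^'m \<Rightarrow> real" where
  "partial i f x = deriv (\<lambda>t. f (x + t *\<^sub>R axis i 1)) 0"

definition hessian :: "(real^'m::finite \<Rightarrow> real) \<Rightarrow> real^'m \<Rightarrow> real^'m^'m" where
  "hessian f x = (\<chi> i j. partial i (partial j f) x)"

end

theory Submission imports Defs begin

definition mon :: "('m::finite \<Rightarrow> nat) \<Rightarrow> real^'m \<Rightarrow> real" where
  "mon k x = (\<Prod>i\<in>UNIV. (x$i) ^ (k i))"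

lemma mon_line:
  "mon k (x + t *\<^sub>R axis j 1) = (x$j + t) ^ k j * (\<Prod>i\<in>UNIV-{j}. (x$i) ^ (k i))"
proof -
  have "mon k (x + t *\<^sub>R axis j 1) = (\<Prod>i\<in>UNIV. ((x + t *\<^sub>R axis j 1)$i) ^ (k i))"
    by (simp add: mon_def)
  also have "\<dots> = ((x + t *\<^sub>R axis j 1)$j) ^ (k j) * (\<Prod>i\<in>UNIV-{j}. ((x + t *\<^sub>R axis j 1)$i) ^ (k i))"
    by (subst prod.remove[of UNIV j]) auto
  also have "(\<Prod>i\<in>UNIV-{j}. ((x + t *\<^sub>R axis j 1)$i) ^ (k i)) = (\<Prod>i\<in>UNIV-{j}. (x$i) ^ (k i))"
    by (rule prod.cong) (auto simp: axis_def)
  finally show ?thesis by (simp add: axis_def)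
qed

lemma mon_dec:
  "mon (k(j := k j - 1)) x = (x$j) ^ (k j - 1) * (\<Prod>i\<in>UNIV-{j}. (x$i) ^ (k i))"
proof -
  have "mon (k(j := k j - 1)) x = (x$j) ^ (k j - 1) * (\<Prod>i\<in>UNIV-{j}. (x$i) ^ ((k(j := k j - 1)) i))"
    unfolding mon_def by (subst prod.remove[of UNIV j]) auto
  also have "(\<Prod>i\<in>UNIV-{j}. (x$i) ^ ((k(j := k j - 1)) i)) = (\<Prod>i\<in>UNIV-{j}. (x$i) ^ (k i))"
    by (rule prod.cong) auto
  finally show ?thesis .
qed

lemma partial_poly:
  fixes K :: "'a set" and g :: "'a \<Rightarrow> ('m::finite \<Rightarrow> nat)"
  assumes "finite K"
  shows "partial j (\<lambda>x. \<Sum>k\<in>K. c k * mon (g k) x) x =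
         (\<Sum>k\<in>K. c k * real (g k j) * mon ((g k)(j := g k j - 1)) x)"
proof -
  have "((\<lambda>t. \<Sum>k\<in>K. c k * mon (g k) (x + t *\<^sub>R axis j 1)) has_field_derivative
          (\<Sum>k\<in>K. c k * real (g k j) * mon ((g k)(j := g k j - 1)) x)) (at 0)"
  proof (rule DERIV_sum)
    fix k assume "k \<in> K"
    have "((\<lambda>t. c k * ((x$j + t) ^ g k j * (\<Prod>i\<in>UNIV-{j}. (x$i) ^ (g k i)))) has_field_derivative
          c k * ((real (g k j) * (x$j + 0) ^ (g k j - 1) * 1) * (\<Prod>i\<in>UNIV-{j}. (x$i) ^ (g k i)))) (at 0)"
      by (intro derivative_eq_intros) auto
    then show "((\<lambda>t. c k * mon (g k) (x + t *\<^sub>R axis j 1)) has_field_derivative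
          c k * real (g k j) * mon ((g k)(j := g k j - 1)) x) (at 0)"
      unfolding mon_line mon_dec by (simp add: mult.assoc)
  qed
  then show ?thesis unfolding partial_def by (rule DERIV_imp_deriv)
qed

lemma finite_K: "finite {k::'m::finite \<Rightarrow> nat. (\<Sum>i\<in>UNIV. k i) = r}"
proof (rule finite_subset)
  show "{k::'m \<Rightarrow> nat. (\<Sum>i\<in>UNIV. k i) = r} \<subseteq> Pi\<^sub>E UNIV (\<lambda>_. {..r})"
  proof
    fix k :: "'m \<Rightarrow> nat" assume "k \<in> {k. (\<Sum>i\<in>UNIV. k i) = r}"
    then have s: "(\<Sum>i\<in>UNIV. k i) = r" by simp
    have "k i \<le> r" for i using s member_le_sum[of i UNIV k] by auto
    then show "k \<in> Pi\<^sub>E UNIV (\<lambda>_. {..r})" by (auto simp: PiE_UNIV_domain)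
  qed
  show "finite (Pi\<^sub>E (UNIV::'m set) (\<lambda>_. {..r}))" by (rule finite_PiE) auto
qed

lemma A_mon: "A r = (\<lambda>x. \<Sum>k\<in>{k. (\<Sum>i\<in>UNIV. k i) = r}. (multinom r k)^2 * mon k x)"
  by (simp add: A_def mon_def fun_eq_iff)

lemma hess_formula:
  "hessian (A r) x $ i $ j = (\<Sum>k\<in>{k::'m::finite\<Rightarrow>nat. (\<Sum>i\<in>UNIV. k i) = r}.
     (multinom r k)^2 * real (k j) * real ((k(j := k j - 1)) i) *
       mon ((k(j := k j - 1))(i := (k(j := k j - 1)) i - 1)) x)"
proof -
  have "partial j (A r) = (\<lambda>x. \<Sum>k\<in>{k::'m\<Rightarrow>nat. (\<Sum>i\<in>UNIV. k i) = r}.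
          ((multinom r k)^2 * real (k j)) * mon (k(j := k j - 1)) x)"
    unfolding A_mon using partial_poly[OF finite_K, where g="\<lambda>k. k"] by (auto simp: fun_eq_iff)
  have "hessian (A r) x $ i $ j = partial i (partial j (A r)) x" by (simp add: hessian_def)
  also have "\<dots> = partial i (\<lambda>x. \<Sum>k\<in>{k::'m\<Rightarrow>nat. (\<Sum>i\<in>UNIV. k i) = r}.
          ((multinom r k)^2 * real (k j)) * mon (k(j := k j - 1)) x) x" using \<open>partial j (A r) = _\<close> by simp
  also have "\<dots> = (\<Sum>k\<in>{k::'m\<Rightarrow>nat. (\<Sum>i\<in>UNIV. k i) = r}.
          ((multinom r k)^2 * real (k j)) * real ((k(j := k j - 1)) i) * mon ((k(j := k j - 1))(i := (k(j := k j - 1)) i - 1)) x)"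
    by (rule partial_poly[OF finite_K])
  finally show ?thesis .
qed

lemma mon_axis: "mon k (axis a 1) = (if \<forall>l. l \<noteq> a \<longrightarrow> k l = 0 then 1 else 0)"
proof (cases "\<forall>l. l \<noteq> a \<longrightarrow> k l = 0")
  case True
  then show ?thesis unfolding mon_def by (auto intro!: prod.neutral simp: axis_def)
next
  case False
  then obtain l where "l \<noteq> a" "k l \<noteq> 0" by auto
  then show ?thesis using False unfolding mon_def
    by (auto intro!: prod_zero bexI[where x=l] simp: axis_def)
qed

definition k0 :: "nat \<Rightarrow> 'm \<Rightarrow> 'm \<Rightarrow> 'm \<Rightarrow> ('m \<Rightarrow> nat)" where
  "k0 r a i j = (\<lambda>l. (if l = a then r - 2 else 0) + (if l = i then 1 else 0) + (if l = j then 1 else 0))"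

lemma k0_in:
  assumes "r \<ge> 2"
  shows "(\<Sum>l\<in>(UNIV::'m::finite set). k0 r a i j l) = r"
  using assms by (simp add: k0_def sum.distrib)

lemma k0_unique:
  fixes k :: "'m::finite \<Rightarrow> nat"
  assumes r: "r \<ge> 2" and s: "(\<Sum>l\<in>UNIV. k l) = r"
    and nz: "k j \<noteq> 0" "(k(j := k j - 1)) i \<noteq> 0"
    and z: "\<forall>l. l \<noteq> a \<longrightarrow> ((k(j := k j - 1))(i := (k(j := k j - 1)) i - 1)) l = 0"
  shows "k = k0 r a i j"
proof -
  have o: "k l = k0 r a i j l" if "l \<noteq> a" for l
    using z[rule_format, OF that] nz that by (auto simp: k0_def split: if_splits)
  have "(\<Sum>l\<in>UNIV. k l) = k a + (\<Sum>l\<in>UNIV-{a}. k l)"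
    by (subst sum.remove[of UNIV a]) auto
  moreover have "(\<Sum>l\<in>UNIV. k0 r a i j l) = k0 r a i j a + (\<Sum>l\<in>UNIV-{a}. k0 r a i j l)"
    by (subst sum.remove[of UNIV a]) auto
  moreover have "(\<Sum>l\<in>UNIV-{a}. k l) = (\<Sum>l\<in>UNIV-{a}. k0 r a i j l)"
    using o by (intro sum.cong) auto
  ultimately have "k a = k0 r a i j a" using s k0_in[OF r, of a i j] by simp
  then show ?thesis using o by (metis ext)
qed

lemma hess_axis:
  fixes a i j :: "'m::finite"
  assumes r: "r \<ge> 2"
  shows "hessian (A r) (axis a 1) $ i $ j =
    (multinom r (k0 r a i j))^2 * real (k0 r a i j j) * real (((k0 r a i j)(j := k0 r a i j j - 1)) i)"
proof -
  let ?K = "{k::'m\<Rightarrow>nat. (\<Sum>i\<in>UNIV. k i) = r}"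
  let ?f = "\<lambda>k::'m\<Rightarrow>nat. (multinom r k)^2 * real (k j) * real ((k(j := k j - 1)) i) *
       mon ((k(j := k j - 1))(i := (k(j := k j - 1)) i - 1)) (axis a 1)"
  have "hessian (A r) (axis a 1) $ i $ j = sum ?f ?K" by (rule hess_formula)
  also have "\<dots> = (\<Sum>k\<in>?K. if k = k0 r a i j then ?f (k0 r a i j) else 0)"
  proof (rule sum.cong)
    fix k assume "k \<in> ?K"
    then have s: "(\<Sum>l\<in>UNIV. k l) = r" by simp
    show "?f k = (if k = k0 r a i j then ?f (k0 r a i j) else 0)"
    proof (cases "?f k = 0")
      case False
      then have "k j \<noteq> 0" "(k(j := k j - 1)) i \<noteq> 0"
        "\<forall>l. l \<noteq> a \<longrightarrow> ((k(j := k j - 1))(i := (k(j := k j - 1)) i - 1)) l = 0"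
        by (auto simp: mon_axis split: if_splits)
      then have "k = k0 r a i j" using k0_unique[OF r s] by blast
      then show ?thesis by simp
    qed auto
  qed simp
  also have "\<dots> = ?f (k0 r a i j)"
    using k0_in[OF r, of a i j] by (simp only: sum.delta[OF finite_K] mem_Collect_eq if_True refl)
  also have "mon (((k0 r a i j)(j := k0 r a i j j - 1))(i := ((k0 r a i j)(j := k0 r a i j j - 1)) i - 1)) (axis a 1) = 1"
    unfolding mon_axis by (auto simp: k0_def)
  finally show ?thesis by simp
qed

lemma prod_k0:
  fixes a i j :: "'m::finite"
  shows "(\<Prod>l\<in>UNIV. real (fact (k0 r a i j l))) = (\<Prod>l\<in>{a,i,j}. real (fact (k0 r a i j l)))"
  by (rule prod.mono_neutral_right) (auto simp: k0_def)

lemma hess_vals: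
  fixes a i j :: "'m::finite"
  assumes r: "r \<ge> 2"
  shows "hessian (A r) (axis a 1) $ i $ j =
    (if i = a \<and> j = a then real r * (real r - 1)
     else if i = a \<or> j = a then real r ^ 2 * (real r - 1)
     else if i = j then real r ^ 2 * (real r - 1)^2 / 2
     else real r ^ 2 * (real r - 1)^2)"
proof -
  obtain s where rs: "r = Suc (Suc s)" using r by (metis add_2_eq_Suc le_Suc_ex)
  have fr: "real (fact r) = real (Suc (Suc s)) * real (Suc s) * real (fact s)"
    by (simp add: rs) algebra
  have fr1: "real (fact r) = real (Suc (Suc s)) * real (fact (Suc s))" unfolding rs by (simp only: fact_Suc of_nat_mult of_nat_id)
  consider "i = a" "j = a" | "i = a" "j \<noteq> a" | "i \<noteq> a" "j = a" | "i \<noteq> a" "j \<noteq> a" "i = j"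
    | "i \<noteq> a" "j \<noteq> a" "i \<noteq> j" by blast
  then show ?thesis
  proof cases
    case 1
    have "r - 2 + 1 + 1 = r" using r by simp
    with 1 show ?thesis unfolding hess_axis[OF r] multinom_def prod_k0
      by (simp add: k0_def)
  next
    case 2
    have P: "(\<Prod>l\<in>UNIV. real (fact (k0 r a i j l))) = real (fact (Suc s))"
      using 2 unfolding prod_k0 by (simp add: k0_def rs algebra_simps)
    have M: "multinom r (k0 r a i j) = real r" unfolding multinom_def P fr1 by (simp add: rs del: fact_Suc)
    show ?thesis unfolding hess_axis[OF r] M using 2 by (simp add: k0_def rs)
  next
    case 3
    have P: "(\<Prod>l\<in>UNIV. real (fact (k0 r a i j l))) = real (fact (Suc s))"
      using 3 unfolding prod_k0 by (simp add: k0_def rs insert_commute algebra_simps)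
    have M: "multinom r (k0 r a i j) = real r" unfolding multinom_def P fr1 by (simp add: rs del: fact_Suc)
    show ?thesis unfolding hess_axis[OF r] M using 3 by (simp add: k0_def rs)
  next
    case 4
    have P: "(\<Prod>l\<in>UNIV. real (fact (k0 r a i j l))) = real (fact s) * 2"
      using 4 unfolding prod_k0 by (simp add: k0_def rs insert_commute numeral_2_eq_2)
    have M: "multinom r (k0 r a i j) = real r * (real r - 1) / 2" unfolding multinom_def P fr
      by (simp add: rs)
    show ?thesis unfolding hess_axis[OF r] M using 4 by (simp add: k0_def rs power2_eq_square field_simps)
  next
    case 5
    have P: "(\<Prod>l\<in>UNIV. real (fact (k0 r a i j l))) = real (fact s)"
      using 5 unfolding prod_k0 by (simp add: k0_def rs insert_commute)
    have M: "multinom r (k0 r a i j) = real r * (real r - 1)" unfolding multinom_def P fr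
      by (simp add: rs)
    show ?thesis unfolding hess_axis[OF r] M using 5 by (simp add: k0_def rs power2_eq_square field_simps)
  qed
qed

theorem mainTheorem7:
  fixes r :: nat
  assumes "r \<ge> 2"
  shows "\<exists>\<xi>::real^'m::finite. det (hessian (A r) \<xi>) \<noteq> 0"
proof
  define a0 :: 'm where "a0 = undefined"
  define H where "H = hessian (A r) (axis a0 (1::real))"
  define R where "R = real r"
  have R2: "R \<ge> 2" using assms by (simp add: R_def)
  define \<alpha> where "\<alpha> = R * (R - 1)"
  define \<beta> where "\<beta> = R^2 * (R - 1)"
  define \<gamma> where "\<gamma> = R^2 * (R - 1)^2"
  have Hv: "H $ i $ j = (if i = a0 \<and> j = a0 then \<alpha> else if i = a0 \<or> j = a0 then \<beta>
      else if i = j then \<gamma> / 2 else \<gamma>)" for i j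
    unfolding H_def hess_vals[OF assms] \<alpha>_def \<beta>_def \<gamma>_def R_def by simp
  have "\<forall>x. H *v x = 0 \<longrightarrow> x = 0"
  proof (intro allI impI)
    fix x :: "real^'m" assume hx: "H *v x = 0"
    define S where "S = (\<Sum>j\<in>UNIV-{a0}. x$j)"
    define x0 where "x0 = x$a0"
    have row: "(H *v x)$i = H$i$a0 * x0 + (\<Sum>j\<in>UNIV-{a0}. H$i$j * x$j)" for i
      unfolding matrix_vector_mult_def x0_def by (simp add: sum.remove[of UNIV a0])
    have e1: "\<alpha> * x0 + \<beta> * S = 0"
    proof -
      have "(H *v x)$a0 = \<alpha> * x0 + \<beta> * S"
        unfolding row S_def by (simp add: Hv sum_distrib_left)
      then show ?thesis using hx by simp
    qed
    have ei: "\<gamma> * x$i = 2 * (\<beta> * x0 + \<gamma> * S)" if "i \<noteq> a0" for i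
    proof -
      have "(\<Sum>j\<in>UNIV-{a0}. H$i$j * x$j) = (\<Sum>j\<in>UNIV-{a0}. \<gamma> * x$j - (if j = i then \<gamma>/2 * x$j else 0))"
        using that by (intro sum.cong) (auto simp: Hv)
      also have "\<dots> = \<gamma> * S - \<gamma>/2 * x$i"
        using that by (simp add: sum_subtractf sum_distrib_left S_def sum.delta)
      finally have "(H *v x)$i = \<beta> * x0 + \<gamma> * S - \<gamma>/2 * x$i"
        unfolding row using that by (simp add: Hv)
      then show ?thesis using hx by (simp add: field_simps)
    qed
    define m1 where "m1 = real (card (UNIV - {a0}))"
    have m1: "m1 \<ge> 0" by (simp add: m1_def)
    have "\<gamma> * S = (\<Sum>j\<in>UNIV-{a0}. \<gamma> * x$j)" by (simp add: S_def sum_distrib_left)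
    also have "\<dots> = (\<Sum>j\<in>UNIV-{a0}. 2 * (\<beta> * x0 + \<gamma> * S))" by (intro sum.cong) (auto simp: ei)
    also have "\<dots> = m1 * (2 * (\<beta> * x0 + \<gamma> * S))" by (simp add: m1_def)
    finally have e2: "\<gamma> * S = m1 * (2 * (\<beta> * x0 + \<gamma> * S))" .
    have Rp: "R * (R - 1) > 0" using R2 by (simp add: mult_pos_pos)
    have f1: "x0 = - R * S"
    proof -
      have "R * (R - 1) * (x0 + R * S) = 0" using e1 unfolding \<alpha>_def \<beta>_def by (simp add: algebra_simps power2_eq_square)
      then show ?thesis using R2 by auto
    qed
    have f2: "(R - 1) * S = 2 * m1 * (x0 + (R - 1) * S)"
    proof -
      have "R^2 * (R - 1) * ((R - 1) * S - 2 * m1 * (x0 + (R - 1) * S)) = 0"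
        using e2 unfolding \<beta>_def \<gamma>_def by (simp add: algebra_simps power2_eq_square)
      moreover have "R^2 * (R - 1) \<noteq> 0" using R2 by simp
      ultimately show ?thesis by simp
    qed
    have "S * (R - 1 + 2 * m1) = 0" using f2 unfolding f1 by (simp add: algebra_simps)
    moreover have "R - 1 + 2 * m1 > 0" using R2 m1 by simp
    ultimately have S0: "S = 0" by simp
    then have x00: "x0 = 0" using f1 by simp
    have gnz: "\<gamma> \<noteq> 0" using R2 unfolding \<gamma>_def by simp
    show "x = 0"
    proof (rule vec_eq_iff[THEN iffD2, rule_format])
      fix i show "x$i = 0$i"
      proof (cases "i = a0")
        case True then show ?thesis using x00 x0_def by simp
      next
        case False then show ?thesis using ei[OF False] S0 x00 gnz by simp
      qed
    qed
  qed
  then have "invertible H" unfolding invertible_left_inverse matrix_left_invertible_ker .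
  then show "det (hessian (A r) (axis a0 1)) \<noteq> 0" unfolding H_def invertible_det_nz .
qed

end
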